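(* Let $\mathcal R$ be a reaction network and suppose $\mathcal U\subseteq\mathcal S$ is eliminable in $\mathcal R$ with respect to $\mathcal F\subseteq\mathcal R_{\mathcal U}$. Let $x,x'\in\mathbb{N}_0^n$. (i) If $x$ leads to $x'$ via $\mathcal R^*_{\mathcal U,\mathcal F}$, then $x$ leads to $x'$ via $\mathcal R$. (ii) Suppose moreover that $\mathcal U$ consists of intermediate species, that $\mathcal F=\mathcal R_{\mathcal U}$, and that $(\mathrm{supp}(x)\cup\mathrm{supp}(x'))\cap\mathcal U=\emptyset$. If $x$ leads to $x'$ via $\mathcal R$, then $x$ leads to $x'$ via $\mathcal R^*_{\mathcal U,\mathcal F}$.
   Context: Species $S_1,\dots,S_n$ are the unit vectors of $\mathbb{N}_0^n$ and $\mathcal S=\{S_1,\dots,S_n\}$; for $x\in\mathbb{N}_0^n$, $\mathrm{supp}(x)=\{S_k: x^k>0\}$. A reaction network (RN) is a (possibly infinite) subset $\mathcal R\subseteq\mathbb{N}_0^n\times\mathbb{N}_0^n$ containing no $(y,y')$ with $y=y'$; elements $(y,y')$ are reactions $y\to y'$ with reactant $y$ and product $y'$. For $r_1=(y_1,y_1'),\ r_2=(y_2,y_2')$ define $r_1\oplus r_2=(y_1+0\vee(y_2-y_1'),\ y_2'+0\vee(y_1'-y_2))$ ($\vee$ componentwise maximum); it is associative. $\mathrm{cl}(A)$ is the set of all finite $\oplus$-sums of elements of $A$, including $(0,0)$. $(y_1,y_1')\sim(0,0)$ means $y_1=y_1'$. For $\mathcal U\subseteq\mathcal S$ and a set $B$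 write $B_{\mathcal U}=\{(y,y')\in B:\mathrm{supp}(y)\cap\mathcal U\neq\emptyset\}$, $B_{\mathcal U}'=\{(y,y')\in B:\mathrm{supp}(y')\cap\mathcal U\neq\emptyset\}$. Set $\overline{\mathcal R}=\mathrm{cl}(\mathcal R)$, $\mathcal R_0=\mathcal R\setminus(\mathcal R_{\mathcal U}\cup\mathcal R_{\mathcal U}')$, $\overline{\mathcal R}_0=\overline{\mathcal R}\setminus(\overline{\mathcal R}_{\mathcal U}\cup\overline{\mathcal R}_{\mathcal U}')$. $\mathcal U$ is eliminable in $\mathcal R$ with respect to $\mathcal F\subseteq\mathcal R_{\mathcal U}$ if for every $r_0\in\mathcal R_{\mathcal U}'$ and $r_1\in\mathrm{cl}(\mathcal F)$ with $r_0\oplus r_1\notin\overline{\mathcal R}_{\mathcal U}$ there is $r_2\in\mathrm{cl}(\mathcal F)$ with $r_0\oplus r_1\oplus r_2\in\overline{\mathcal R}_0$. The reduced RN is $\mathcal R^*_{\mathcal U,\mathcal F}=\mathcal R_0\cup\mathcal R_{\mathcal U,\mathcal F}$ with $\mathcal R_{\mathcal U,\mathcal F}=\{r_0\oplus r_1\in\overline{\mathcal R}_0: r_0\in\mathcal R_{\mathcal U}',\ r_1\in\mathrm{cl}(\mathcal F)\}\setminus\{r:r\sim(0,0)\}$. $\mathcal U$ consists of non-interacting species if for every $y\to y'\in\mathcal R$, $\sum_{S_i\in\mathcal U}y^i\le1$ and $\sum_{S_i\in\mathcal U}(y')^i\le1$; it consists of intermediate species if moreover, for every $S_i\in\mathcal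 U$ and $y\to y'\in\mathcal R$, $y^i=1$ implies $y=S_i$ and $(y')^i=1$ implies $y'=S_i$. An ordered sequence of reactions $y_1\to y_1',\dots,y_m\to y_m'$ is active on $x$ if $x+\sum_{i=1}^{k-1}(y_i'-y_i)\ge y_k$ (componentwise) for all $k$; $x$ leads to $x'$ via an RN if there is an ordered sequence of $m\ge0$ of its reactions (repetitions allowed) active on $x$ with $x'=x+\sum_{i=1}^m(y_i'-y_i)$. *)

theory Defs
  imports Main
begin

text \<open>Complexes are vectors in N_0^n, modelled as functions from a finite species
  type 's to nat; species S_i are identified with elements of 's.\<close>

type_synonym 's complex = "'s \<Rightarrow> nat"
type_synonym 's reaction = "'s complex \<times> 's complex"

definition supp :: "'s complex \<Rightarrow> 's set" where
  "supp x = {k. x k > 0}"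

definition reaction_network :: "'s reaction set \<Rightarrow> bool" where
  "reaction_network R \<longleftrightarrow> (\<forall>(y, y') \<in> R. y \<noteq> y')"

text \<open>r1 \<oplus> r2; truncated nat subtraction is 0 \<or> (a - b).\<close>
definition oplus :: "'s reaction \<Rightarrow> 's reaction \<Rightarrow> 's reaction" (infixl "\<oplus>\<^sub>R" 65) where
  "oplus r1 r2 = (case r1 of (y1, y1') \<Rightarrow> case r2 of (y2, y2') \<Rightarrow>
      ((\<lambda>i. y1 i + (y2 i - y1' i)), (\<lambda>i. y2' i + (y1' i - y2 i))))"

definition cl :: "'s reaction set \<Rightarrow> 's reaction set" where
  "cl A = {foldl oplus ((\<lambda>_. 0), (\<lambda>_. 0)) rs | rs. set rs \<subseteq> A}"

definition sim0 :: "'s reaction \<Rightarrow> bool" where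
  "sim0 r \<longleftrightarrow> fst r = snd r"

definition reactant_in :: "'s set \<Rightarrow> 's reaction set \<Rightarrow> 's reaction set" where
  "reactant_in U B = {r \<in> B. supp (fst r) \<inter> U \<noteq> {}}"

definition product_in :: "'s set \<Rightarrow> 's reaction set \<Rightarrow> 's reaction set" where
  "product_in U B = {r \<in> B. supp (snd r) \<inter> U \<noteq> {}}"

definition zero_part :: "'s set \<Rightarrow> 's reaction set \<Rightarrow> 's reaction set" where
  "zero_part U B = B - (reactant_in U B \<union> product_in U B)"

definition eliminable :: "'s reaction set \<Rightarrow> 's set \<Rightarrow> 's reaction set \<Rightarrow> bool" where
  "eliminable R U F \<longleftrightarrow>
     (\<forall>r0 \<in> product_in U R. \<forall>r1 \<in> cl F.
        r0 \<oplus>\<^sub>R r1 \<notin> reactant_in U (cl R) \<longrightarrow>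
        (\<exists>r2 \<in> cl F. r0 \<oplus>\<^sub>R r1 \<oplus>\<^sub>R r2 \<in> zero_part U (cl R)))"

definition reduced_part :: "'s reaction set \<Rightarrow> 's set \<Rightarrow> 's reaction set \<Rightarrow> 's reaction set" where
  "reduced_part R U F =
     {r0 \<oplus>\<^sub>R r1 | r0 r1. r0 \<in> product_in U R \<and> r1 \<in> cl F \<and> r0 \<oplus>\<^sub>R r1 \<in> zero_part U (cl R)}
     - {r. sim0 r}"

definition reduced_network :: "'s reaction set \<Rightarrow> 's set \<Rightarrow> 's reaction set \<Rightarrow> 's reaction set" where
  "reduced_network R U F = zero_part U R \<union> reduced_part R U F"

definition non_interacting :: "'s set \<Rightarrow> 's reaction set \<Rightarrow> bool" where
  "non_interacting U R \<longleftrightarrow> (\<forall>(y, y') \<in> R. (\<Sum>i\<in>U. y i) \<le> 1 \<and> (\<Sum>i\<in>U. y' i) \<le> 1)"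

definition intermediate :: "'s set \<Rightarrow> 's reaction set \<Rightarrow> bool" where
  "intermediate U R \<longleftrightarrow> non_interacting U R \<and>
     (\<forall>i \<in> U. \<forall>(y, y') \<in> R. (y i = 1 \<longrightarrow> y = (\<lambda>k. if k = i then 1 else 0))
                          \<and> (y' i = 1 \<longrightarrow> y' = (\<lambda>k. if k = i then 1 else 0)))"

text \<open>When the
  sequence is active, each intermediate state x + \<Sum>(y_i' - y_i) is a nonnegative
  vector, computed exactly here as (x - y) + y' with y \<le> x.\<close>
fun active :: "'s complex \<Rightarrow> 's reaction list \<Rightarrow> bool" where
  "active x [] = True"
| "active x ((y, y') # rs) = (y \<le> x \<and> active (\<lambda>i. x i - y i + y' i) rs)"

fun result :: "'s complex \<Rightarrow> 's reaction list \<Rightarrow> 's complex" where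
  "result x [] = x"
| "result x ((y, y') # rs) = result (\<lambda>i. x i - y i + y' i) rs"

definition leads_to :: "'s reaction set \<Rightarrow> 's complex \<Rightarrow> 's complex \<Rightarrow> bool" where
  "leads_to R x x' \<longleftrightarrow> (\<exists>rs. set rs \<subseteq> R \<and> active x rs \<and> result x rs = x')"

end

theory Submission
  imports Defs
begin

lemma oplus_simp: "(a,a') \<oplus>\<^sub>R (b,b') = (\<lambda>i. a i + (b i - a' i), \<lambda>i. b' i + (a' i - b i))"
  by (simp add: oplus_def)

lemma assoc_a1: "(a::nat) + (b - a') + (c - (b' + (a' - b))) = a + (b + (c - b') - a')" by linarith
lemma assoc_a2: "(c'::nat) + (b' + (a' - b) - c) = c' + (b' - c) + (a' - (b + (c - b')))" by linarith

lemma oplus_assoc: "(r1 \<oplus>\<^sub>R r2) \<oplus>\<^sub>R r3 = r1 \<oplus>\<^sub>R (r2 \<oplus>\<^sub>R r3)"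
proof -
  obtain a a' where 1: "r1 = (a,a')" by (cases r1)
  obtain b b' where 2: "r2 = (b,b')" by (cases r2)
  obtain c c' where 3: "r3 = (c,c')" by (cases r3)
  show ?thesis unfolding 1 2 3 oplus_simp
    unfolding prod.inject by (intro conjI ext; rule assoc_a1 assoc_a2)
qed

definition z0 :: "'s reaction" where "z0 = ((\<lambda>_. 0), (\<lambda>_. 0))"

lemma z0_left[simp]: "z0 \<oplus>\<^sub>R r = r"
  by (cases r) (simp add: z0_def oplus_simp)

lemma z0_right[simp]: "r \<oplus>\<^sub>R z0 = r"
  by (cases r) (simp add: z0_def oplus_simp)

lemma foldl_oplus: "foldl oplus (a \<oplus>\<^sub>R b) rs = a \<oplus>\<^sub>R foldl oplus b rs"
  by (induction rs arbitrary: b) (simp_all add: oplus_assoc)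

lemma cl_alt: "cl A = {foldl oplus z0 rs | rs. set rs \<subseteq> A}"
  by (simp add: cl_def z0_def)

lemma z0_cl: "z0 \<in> cl A"
  unfolding cl_alt by (rule CollectI, rule exI[of _ "[]"]) simp

lemma cl_oplus: assumes "r0 \<in> A" "r1 \<in> cl A" shows "r0 \<oplus>\<^sub>R r1 \<in> cl A"
proof -
  obtain rs where rs: "set rs \<subseteq> A" "r1 = foldl oplus z0 rs" using assms(2) unfolding cl_alt by blast
  have "r0 \<oplus>\<^sub>R r1 = foldl oplus z0 (r0 # rs)"
    using foldl_oplus[of r0 z0 rs] by (simp add: rs(2))
  moreover have "set (r0 # rs) \<subseteq> A" using rs assms(1) by auto
  ultimately show ?thesis unfolding cl_alt by blast
qed

lemma cl_snoc: assumes "r1 \<in> cl A" "r \<in> A" shows "r1 \<oplus>\<^sub>R r \<in> cl A"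
proof -
  obtain rs where rs: "set rs \<subseteq> A" "r1 = foldl oplus z0 rs" using assms(1) unfolding cl_alt by blast
  have "r1 \<oplus>\<^sub>R r = foldl oplus z0 (rs @ [r])" by (simp add: rs(2))
  moreover have "set (rs @ [r]) \<subseteq> A" using rs assms(2) by auto
  ultimately show ?thesis unfolding cl_alt by blast
qed

lemma cl_base: assumes "r \<in> A" shows "r \<in> cl A"
proof -
  have "r \<oplus>\<^sub>R z0 \<in> cl A" by (rule cl_oplus[OF assms z0_cl])
  thus ?thesis by simp
qed

lemma cl_mono: assumes "A \<subseteq> B" shows "cl A \<subseteq> cl B"
proof
  fix r assume "r \<in> cl A"
  then obtain rs where rs: "set rs \<subseteq> A" "r = foldl oplus z0 rs" unfolding cl_alt by blast
  have "set rs \<subseteq> B" using rs(1) assms by (rule order_trans)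
  with rs(2) show "r \<in> cl B" unfolding cl_alt by blast
qed

lemma active_append: "active x (xs @ ys) = (active x xs \<and> active (result x xs) ys)"
  by (induction xs arbitrary: x) auto

lemma result_append: "result x (xs @ ys) = result (result x xs) ys"
  by (induction xs arbitrary: x) auto

lemma leads_refl: "leads_to N x x"
  unfolding leads_to_def by (rule exI[of _ "[]"]) simp

lemma leads_trans: assumes "leads_to N x w" "leads_to N w v" shows "leads_to N x v"
proof -
  obtain rs where rs: "set rs \<subseteq> N" "active x rs" "result x rs = w" using assms(1) leads_to_def by blast
  obtain qs where qs: "set qs \<subseteq> N" "active w qs" "result w qs = v" using assms(2) leads_to_def by blast
  show ?thesis unfolding leads_to_def
    by (rule exI[of _ "rs @ qs"]) (simp add: active_append result_append rs qs)
qed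

lemma leads_one: assumes "(y,y') \<in> N" "y \<le> w" shows "leads_to N w (\<lambda>i. w i - y i + y' i)"
  unfolding leads_to_def by (rule exI[of _ "[(y,y')]"]) (simp add: assms)

lemma leads_step: assumes "leads_to N x w" "(y,y') \<in> N" "y \<le> w"
  shows "leads_to N x (\<lambda>i. w i - y i + y' i)"
  using leads_trans[OF assms(1) leads_one[OF assms(2,3)]] .

lemma L1: assumes "(c,c') = (a,a') \<oplus>\<^sub>R (b,b')" "c \<le> x"
  shows "a \<le> x" "b \<le> (\<lambda>i. x i - a i + a' i)"
    "(\<lambda>i. (x i - a i + a' i) - b i + b' i) = (\<lambda>i. x i - c i + c' i)"
proof -
  have c: "\<And>i. c i = a i + (b i - a' i)" "\<And>i. c' i = b' i + (a' i - b i)"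
    using assms(1) by (simp_all add: oplus_simp)
  have x: "\<And>i. c i \<le> x i" using assms(2) by (simp add: le_fun_def)
  show "a \<le> x" using x c by (simp add: le_fun_def) (metis le_add1 order_trans)
  show "b \<le> (\<lambda>i. x i - a i + a' i)" unfolding le_fun_def
  proof
    fix i show "b i \<le> x i - a i + a' i" using x[of i] c[of i] by arith
  qed
  show "(\<lambda>i. (x i - a i + a' i) - b i + b' i) = (\<lambda>i. x i - c i + c' i)"
  proof
    fix i show "(x i - a i + a' i) - b i + b' i = x i - c i + c' i" using x[of i] c(1)[of i] c(2)[of i] by arith
  qed
qed

lemma L2: assumes "set rs \<subseteq> R" "foldl oplus (a,a') rs = (y,y')" "y \<le> x"
  shows "a \<le> x \<and> active (\<lambda>i. x i - a i + a' i) rs \<and> result (\<lambda>i. x i - a i + a' i) rs = (\<lambda>i. x i - y i + y' i)"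
  using assms
proof (induction rs arbitrary: a a')
  case Nil
  then show ?case by simp
next
  case (Cons r rs)
  obtain b b' where r: "r = (b,b')" by (cases r)
  obtain c c' where cc: "(c,c') = (a,a') \<oplus>\<^sub>R (b,b')" by (metis surj_pair)
  have "foldl oplus (c,c') rs = (y,y')" using Cons.prems(2) r cc by simp
  from Cons.IH[OF _ this Cons.prems(3)] Cons.prems(1)
  have IH: "c \<le> x" "active (\<lambda>i. x i - c i + c' i) rs" "result (\<lambda>i. x i - c i + c' i) rs = (\<lambda>i. x i - y i + y' i)"
    by auto
  note l = L1[OF cc IH(1)]
  show ?case using l IH r by simp
qed

lemma cl_leads: assumes "r \<in> cl R" "fst r \<le> x"
  shows "leads_to R x (\<lambda>i. x i - fst r i + snd r i)"
proof -
  obtain rs where rs: "set rs \<subseteq> R" "foldl oplus z0 rs = r" using assms(1) unfolding cl_alt by blast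
  have "foldl oplus ((\<lambda>_. 0::nat), (\<lambda>_. 0::nat)) rs = (fst r, snd r)" using rs(2) by (simp add: z0_def)
  from L2[OF rs(1) this assms(2)] show ?thesis unfolding leads_to_def using rs(1) by auto
qed

lemma leads_cl: assumes "set rs \<subseteq> cl R" "active x rs" shows "leads_to R x (result x rs)"
  using assms
proof (induction rs arbitrary: x)
  case Nil then show ?case by (simp add: leads_refl)
next
  case (Cons r rs)
  obtain y y' where r: "r = (y,y')" by (cases r)
  have "leads_to R x (\<lambda>i. x i - y i + y' i)" using cl_leads[of r R x] Cons.prems r by simp
  moreover have "leads_to R (\<lambda>i. x i - y i + y' i) (result (\<lambda>i. x i - y i + y' i) rs)"
    using Cons r by simp
  ultimately show ?case using r leads_trans by simp
qed

lemma part1: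
  assumes "F \<subseteq> reactant_in U R" "leads_to (reduced_network R U F) x x'"
  shows "leads_to R x x'"
proof -
  have FR: "cl F \<subseteq> cl R" using assms(1) cl_mono unfolding reactant_in_def by blast
  have sub: "reduced_network R U F \<subseteq> cl R"
  proof
    fix r assume "r \<in> reduced_network R U F"
    then consider "r \<in> zero_part U R" | "r \<in> reduced_part R U F" unfolding reduced_network_def by blast
    then show "r \<in> cl R"
    proof cases
      case 1 then show ?thesis using cl_base unfolding zero_part_def by blast
    next
      case 2 then show ?thesis unfolding reduced_part_def zero_part_def by blast
    qed
  qed
  obtain rs where "set rs \<subseteq> reduced_network R U F" "active x rs" "result x rs = x'"
    using assms(2) leads_to_def by blast
  then show ?thesis using leads_cl[of rs R x] sub by auto
qed


definition unitv :: "'s \<Rightarrow> 's complex" where "unitv i = (\<lambda>k. if k = i then 1 else 0)"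

definition sp :: "('s complex \<times> 's) list \<Rightarrow> 's \<Rightarrow> nat" where
  "sp P k = sum_list (map (\<lambda>c. fst c k) P)"

definition cnt :: "('s complex \<times> 's) list \<Rightarrow> 's \<Rightarrow> nat" where
  "cnt P k = length (filter (\<lambda>c. snd c = k) P)"

lemma sp_simps[simp]: "sp [] k = 0" "sp (c # P) k = fst c k + sp P k" "sp (P @ Q) k = sp P k + sp Q k"
  by (simp_all add: sp_def)

lemma cnt_simps[simp]: "cnt [] k = 0" "cnt (c # P) k = (if snd c = k then 1 else 0) + cnt P k"
  "cnt (P @ Q) k = cnt P k + cnt Q k"
  by (simp_all add: cnt_def)

definition inv where
  "inv R U F x0 xt w P \<longleftrightarrow> leads_to (reduced_network R U F) x0 w
    \<and> (\<forall>k. k \<notin> U \<longrightarrow> w k = xt k + sp P k)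
    \<and> (\<forall>k\<in>U. w k = 0)
    \<and> (\<forall>k\<in>U. xt k = cnt P k)
    \<and> (\<forall>c\<in>set P. (\<forall>k\<in>U. fst c k = 0) \<and> snd c \<in> U
         \<and> (\<exists>r0\<in>product_in U R. \<exists>r1\<in>cl F. r0 \<oplus>\<^sub>R r1 = (fst c, unitv (snd c))))"

lemma inter_cases:
  assumes "intermediate U R" "(y,y') \<in> R" "finite U"
  shows "(\<forall>k\<in>U. y k = 0) \<or> (\<exists>i\<in>U. y = unitv i)"
    and "(\<forall>k\<in>U. y' k = 0) \<or> (\<exists>i\<in>U. y' = unitv i)"
proof -
  have ni: "(\<Sum>i\<in>U. y i) \<le> 1" "(\<Sum>i\<in>U. y' i) \<le> 1"
    using assms(1,2) unfolding intermediate_def non_interacting_def by auto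
  have im: "\<And>i. i \<in> U \<Longrightarrow> (y i = 1 \<longrightarrow> y = unitv i) \<and> (y' i = 1 \<longrightarrow> y' = unitv i)"
    using assms(1,2) unfolding intermediate_def unitv_def by fastforce
  show "(\<forall>k\<in>U. y k = 0) \<or> (\<exists>i\<in>U. y = unitv i)"
  proof (cases "\<forall>k\<in>U. y k = 0")
    case False
    then obtain k where k: "k \<in> U" "y k \<noteq> 0" by blast
    have "y k \<le> (\<Sum>i\<in>U. y i)" using member_le_sum[of k U y] k assms(3) by simp
    hence "y k = 1" using ni k by linarith
    thus ?thesis using im k by blast
  qed simp
  show "(\<forall>k\<in>U. y' k = 0) \<or> (\<exists>i\<in>U. y' = unitv i)"
  proof (cases "\<forall>k\<in>U. y' k = 0")
    case False
    then obtain k where k: "k \<in> U" "y' k \<noteq> 0" by blast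
    have "y' k \<le> (\<Sum>i\<in>U. y' i)" using member_le_sum[of k U y'] k assms(3) by simp
    hence "y' k = 1" using ni k by linarith
    thus ?thesis using im k by blast
  qed simp
qed

lemma supp_U: "(supp y \<inter> U = {}) = (\<forall>k\<in>U. y k = 0)"
  by (auto simp: supp_def)

lemma unitv_supp: "i \<in> U \<Longrightarrow> supp (unitv i) \<inter> U \<noteq> {}"
  by (auto simp: supp_def unitv_def)

lemma oplus_chain: "(a, a') \<oplus>\<^sub>R (a', b') = (a, b')"
  by (simp add: oplus_simp)

lemma sp_mem: "c \<in> set P \<Longrightarrow> fst c k \<le> sp P k"
  by (induction P) auto

lemma step:
  assumes inter: "intermediate U R" and FU: "F = reactant_in U R" and fin: "finite U"
    and yR: "(y,y') \<in> R" and yx: "y \<le> xt" and I: "inv R U F x0 xt w P"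
  shows "\<exists>w' P'. inv R U F x0 (\<lambda>i. xt i - y i + y' i) w' P'"
proof -
  note I' = I[unfolded inv_def]
  have lead: "leads_to (reduced_network R U F) x0 w" using I' by blast
  have wa: "\<And>k. k \<notin> U \<Longrightarrow> w k = xt k + sp P k" using I' by blast
  have wb: "\<And>k. k \<in> U \<Longrightarrow> w k = 0" using I' by blast
  have xc: "\<And>k. k \<in> U \<Longrightarrow> xt k = cnt P k" using I' by blast
  have Pc: "\<And>c. c \<in> set P \<Longrightarrow> (\<forall>k\<in>U. fst c k = 0) \<and> snd c \<in> U
         \<and> (\<exists>r0\<in>product_in U R. \<exists>r1\<in>cl F. r0 \<oplus>\<^sub>R r1 = (fst c, unitv (snd c)))" using I' by blast
  have yx': "\<And>k. y k \<le> xt k" using yx by (simp add: le_fun_def)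
  let ?x = "\<lambda>i. xt i - y i + y' i"
  from inter_cases[OF inter yR fin]
  consider (A) "\<forall>k\<in>U. y k = 0" "\<forall>k\<in>U. y' k = 0"
    | (B) j where "\<forall>k\<in>U. y k = 0" "j \<in> U" "y' = unitv j"
    | (C) i where "i \<in> U" "y = unitv i" by blast
  then show ?thesis
  proof cases
    case A
    have "(y,y') \<in> zero_part U R" unfolding zero_part_def reactant_in_def product_in_def
      using A yR supp_U[of y U] supp_U[of y' U] by auto
    hence N: "(y,y') \<in> reduced_network R U F" unfolding reduced_network_def by blast
    have yw: "y \<le> w" unfolding le_fun_def
    proof
      fix k show "y k \<le> w k" using A wa[of k] yx'[of k] by (cases "k \<in> U") auto
    qed
    have "inv R U F x0 ?x (\<lambda>i. w i - y i + y' i) P"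
      unfolding inv_def
    proof (intro conjI)
      show "leads_to (reduced_network R U F) x0 (\<lambda>i. w i - y i + y' i)"
        using leads_step[OF lead N yw] .
      show "\<forall>k. k \<notin> U \<longrightarrow> w k - y k + y' k = xt k - y k + y' k + sp P k"
      proof (intro allI impI)
        fix k assume "k \<notin> U"
        then have "w k = xt k + sp P k" by (rule wa)
        with yx'[of k] show "w k - y k + y' k = xt k - y k + y' k + sp P k" by linarith
      qed
      show "\<forall>k\<in>U. w k - y k + y' k = 0" using wb A by simp
      show "\<forall>k\<in>U. xt k - y k + y' k = cnt P k" using xc A by simp
      show "\<forall>c\<in>set P. (\<forall>k\<in>U. fst c k = 0) \<and> snd c \<in> U
         \<and> (\<exists>r0\<in>product_in U R. \<exists>r1\<in>cl F. r0 \<oplus>\<^sub>R r1 = (fst c, unitv (snd c)))" using Pc by blast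
    qed
    thus ?thesis by blast
  next
    case B
    have r0: "(y,y') \<in> product_in U R" unfolding product_in_def using yR B unitv_supp[of j U] by auto
    have "inv R U F x0 ?x w ((y, j) # P)"
      unfolding inv_def
    proof (intro conjI)
      show "leads_to (reduced_network R U F) x0 w" using lead .
      show "\<forall>k. k \<notin> U \<longrightarrow> w k = xt k - y k + y' k + sp ((y, j) # P) k"
        using wa yx' B by (auto simp: unitv_def)
      show "\<forall>k\<in>U. w k = 0" using wb by simp
      show "\<forall>k\<in>U. xt k - y k + y' k = cnt ((y, j) # P) k" using xc B by (auto simp: unitv_def)
      show "\<forall>c\<in>set ((y, j) # P). (\<forall>k\<in>U. fst c k = 0) \<and> snd c \<in> U
         \<and> (\<exists>r0\<in>product_in U R. \<exists>r1\<in>cl F. r0 \<oplus>\<^sub>R r1 = (fst c, unitv (snd c)))"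
      proof
        fix c assume "c \<in> set ((y, j) # P)"
        then consider "c = (y,j)" | "c \<in> set P" by auto
        then show "(\<forall>k\<in>U. fst c k = 0) \<and> snd c \<in> U
         \<and> (\<exists>r0\<in>product_in U R. \<exists>r1\<in>cl F. r0 \<oplus>\<^sub>R r1 = (fst c, unitv (snd c)))"
        proof cases
          case 1
          have "(y,y') \<oplus>\<^sub>R z0 = (fst c, unitv (snd c))" using 1 B by simp
          have "\<exists>r0\<in>product_in U R. \<exists>r1\<in>cl F. r0 \<oplus>\<^sub>R r1 = (y, unitv j)"
            using B r0 z0_cl[of F] z0_right[of "(y, unitv j)"] by blast
          then show ?thesis using 1 B by auto
        qed (use Pc in blast)
      qed
    qed
    thus ?thesis by blast
  next
    case C
    have "xt i \<ge> 1" using yx'[of i] C by (simp add: unitv_def)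
    hence "cnt P i \<noteq> 0" using xc C by simp
    then obtain c where c: "c \<in> set P" "snd c = i" unfolding cnt_def
      by (metis (mono_tags, lifting) filter_empty_conv list.size(3))
    then obtain P1 P2 where P: "P = P1 @ c # P2" by (meson split_list)
    obtain a where ca: "c = (a, i)" using c(2) by (metis prod.collapse)
    have aU: "\<forall>k\<in>U. a k = 0" and rep: "\<exists>r0\<in>product_in U R. \<exists>r1\<in>cl F. r0 \<oplus>\<^sub>R r1 = (a, unitv i)"
      using Pc[OF c(1)] ca by auto
    then obtain r0 r1 where r01: "r0 \<in> product_in U R" "r1 \<in> cl F" "r0 \<oplus>\<^sub>R r1 = (a, unitv i)" by blast
    have yF: "(y,y') \<in> F" unfolding FU reactant_in_def using yR C unitv_supp[of i U] by auto
    have r1': "r1 \<oplus>\<^sub>R (y,y') \<in> cl F" using cl_snoc[OF r01(2) yF] .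
    have val: "r0 \<oplus>\<^sub>R (r1 \<oplus>\<^sub>R (y,y')) = (a, y')"
      using r01(3) C by (simp add: oplus_assoc[symmetric] oplus_chain)
    have xci: "cnt P i \<ge> 1" using \<open>xt i \<ge> 1\<close> xc C by simp
    consider (C1) j where "j \<in> U" "y' = unitv j" | (C2) "\<forall>k\<in>U. y' k = 0"
      using inter_cases(2)[OF inter yR fin] by blast
    then show ?thesis
    proof cases
      case C1
      let ?P = "P1 @ (a, j) # P2"
      have "inv R U F x0 ?x w ?P"
        unfolding inv_def
      proof (intro conjI)
        show "leads_to (reduced_network R U F) x0 w" using lead .
        show "\<forall>k. k \<notin> U \<longrightarrow> w k = xt k - y k + y' k + sp ?P k"
          using wa C C1 P ca by (auto simp: unitv_def)
        show "\<forall>k\<in>U. w k = 0" using wb by simp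
        show "\<forall>k\<in>U. xt k - y k + y' k = cnt ?P k"
        proof
          fix k assume k: "k \<in> U"
          show "xt k - y k + y' k = cnt ?P k"
            using xc[OF k] xci C C1 P ca by (auto simp: unitv_def)
        qed
        show "\<forall>c\<in>set ?P. (\<forall>k\<in>U. fst c k = 0) \<and> snd c \<in> U
           \<and> (\<exists>r0\<in>product_in U R. \<exists>r1\<in>cl F. r0 \<oplus>\<^sub>R r1 = (fst c, unitv (snd c)))"
        proof
          fix d assume "d \<in> set ?P"
          then consider "d = (a,j)" | "d \<in> set P" using P by auto
          then show "(\<forall>k\<in>U. fst d k = 0) \<and> snd d \<in> U
           \<and> (\<exists>r0\<in>product_in U R. \<exists>r1\<in>cl F. r0 \<oplus>\<^sub>R r1 = (fst d, unitv (snd d)))"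
          proof cases
            case 1
            then show ?thesis using aU C1 val r01(1) r1' by auto
          qed (use Pc in blast)
        qed
      qed
      thus ?thesis by blast
    next
      case C2
      let ?P = "P1 @ P2"
      have aw: "a \<le> w" unfolding le_fun_def
      proof
        fix k show "a k \<le> w k"
        proof (cases "k \<in> U")
          case True then show ?thesis using aU by simp
        next
          case False then show ?thesis using wa[of k] sp_mem[OF c(1), of k] ca by simp
        qed
      qed
      have ex: "\<exists>w'. leads_to (reduced_network R U F) x0 w' \<and> (\<forall>k. w' k = w k - a k + y' k)"
      proof (cases "a = y'")
        case True
        have "\<forall>k. w k = w k - a k + y' k"
        proof
          fix k have "a k \<le> w k" using aw by (simp add: le_fun_def)
          then show "w k = w k - a k + y' k" using True by simp
        qed
        then show ?thesis using lead by blast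
      next
        case False
        have FR: "F \<subseteq> R" using FU unfolding reactant_in_def by blast
        have r0R: "r0 \<in> R" using r01(1) unfolding product_in_def by blast
        have r1R: "r1 \<oplus>\<^sub>R (y,y') \<in> cl R" using cl_mono[OF FR] r1' by (rule subsetD)
        have "r0 \<oplus>\<^sub>R (r1 \<oplus>\<^sub>R (y,y')) \<in> cl R" by (rule cl_oplus[OF r0R r1R])
        hence "(a,y') \<in> cl R" by (simp only: val)
        hence Z: "(a,y') \<in> zero_part U (cl R)" unfolding zero_part_def reactant_in_def product_in_def
          using aU C2 supp_U[of a U] supp_U[of y' U] by auto
        have ns: "\<not> sim0 (a,y')" using False by (simp add: sim0_def)
        have "(a,y') \<in> {r0 \<oplus>\<^sub>R r1 | r0 r1. r0 \<in> product_in U R \<and> r1 \<in> cl F \<and> r0 \<oplus>\<^sub>R r1 \<in> zero_part U (cl R)}"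
        proof (rule CollectI, intro exI conjI)
          show "(a,y') = r0 \<oplus>\<^sub>R (r1 \<oplus>\<^sub>R (y,y'))" using val by simp
          show "r0 \<in> product_in U R" by (rule r01(1))
          show "r1 \<oplus>\<^sub>R (y,y') \<in> cl F" by (rule r1')
          show "r0 \<oplus>\<^sub>R (r1 \<oplus>\<^sub>R (y,y')) \<in> zero_part U (cl R)" using Z by (simp only: val)
        qed
        hence "(a,y') \<in> reduced_part R U F" unfolding reduced_part_def using ns by blast
        hence "(a,y') \<in> reduced_network R U F" unfolding reduced_network_def by blast
        from leads_step[OF lead this aw] show ?thesis by auto
      qed
      then obtain w' where w': "leads_to (reduced_network R U F) x0 w'" "\<And>k. w' k = w k - a k + y' k"
        by blast
      have "inv R U F x0 ?x w' ?P"
        unfolding inv_def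
      proof (intro conjI)
        show "leads_to (reduced_network R U F) x0 w'" using w'(1) .
        show "\<forall>k. k \<notin> U \<longrightarrow> w' k = xt k - y k + y' k + sp ?P k"
          using wa C P ca w'(2) by (auto simp: unitv_def)
        show "\<forall>k\<in>U. w' k = 0" using wb aU C2 w'(2) by simp
        show "\<forall>k\<in>U. xt k - y k + y' k = cnt ?P k"
        proof
          fix k assume k: "k \<in> U"
          show "xt k - y k + y' k = cnt ?P k"
            using xc[OF k] xci C C2 P ca k by (auto simp: unitv_def)
        qed
        show "\<forall>c\<in>set ?P. (\<forall>k\<in>U. fst c k = 0) \<and> snd c \<in> U
           \<and> (\<exists>r0\<in>product_in U R. \<exists>r1\<in>cl F. r0 \<oplus>\<^sub>R r1 = (fst c, unitv (snd c)))"
          using Pc P by auto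
      qed
      thus ?thesis by blast
    qed
  qed
qed


lemma simul:
  assumes inter: "intermediate U R" and FU: "F = reactant_in U R" and fin: "finite U"
  shows "set rs \<subseteq> R \<Longrightarrow> active xt rs \<Longrightarrow> inv R U F x0 xt w P \<Longrightarrow> \<exists>w' P'. inv R U F x0 (result xt rs) w' P'"
proof (induction rs arbitrary: xt w P)
  case Nil then show ?case by auto
next
  case (Cons r rs)
  obtain y y' where r: "r = (y,y')" by (cases r)
  have "(y,y') \<in> R" "y \<le> xt" using Cons.prems r by auto
  from step[OF inter FU fin this Cons.prems(3)] obtain w1 P1 where
    "inv R U F x0 (\<lambda>i. xt i - y i + y' i) w1 P1" by blast
  from Cons.IH[OF _ _ this] Cons.prems r show ?case by auto
qed

lemma part2:
  assumes inter: "intermediate U R" and FU: "F = reactant_in U R" and fin: "finite U"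
    and sx: "(supp x \<union> supp x') \<inter> U = {}" and L: "leads_to R x x'"
  shows "leads_to (reduced_network R U F) x x'"
proof -
  obtain rs where rs: "set rs \<subseteq> R" "active x rs" "result x rs = x'" using L leads_to_def by blast
  have x0: "\<forall>k\<in>U. x k = 0" "\<forall>k\<in>U. x' k = 0" using sx unfolding supp_def disjoint_iff by auto
  have "inv R U F x x x []" unfolding inv_def using x0 by (simp add: leads_refl)
  from simul[OF inter FU fin rs(1,2) this] rs(3) obtain w P where I: "inv R U F x x' w P" by auto
  have "P = []"
  proof (rule ccontr)
    assume "P \<noteq> []"
    then obtain c where c: "c \<in> set P" by (cases P) auto
    have "snd c \<in> U" using I c unfolding inv_def by blast
    hence "x' (snd c) = cnt P (snd c)" using I unfolding inv_def by blast
    moreover have "cnt P (snd c) \<noteq> 0" using c unfolding cnt_def by (auto simp: filter_empty_conv)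
    ultimately show False using x0 \<open>snd c \<in> U\<close> by auto
  qed
  have "w = x'"
  proof
    fix k show "w k = x' k" using I x0 \<open>P = []\<close> unfolding inv_def by (cases "k \<in> U") auto
  qed
  thus ?thesis using I unfolding inv_def by blast
qed

theorem theorem5p6:
  fixes R F :: "('s::finite) reaction set" and U :: "'s set"
  assumes "reaction_network R"
    and "F \<subseteq> reactant_in U R"
    and "eliminable R U F"
  shows "(\<forall>x x'. leads_to (reduced_network R U F) x x' \<longrightarrow> leads_to R x x')
       \<and> (intermediate U R \<and> F = reactant_in U R \<longrightarrow>
           (\<forall>x x'. (supp x \<union> supp x') \<inter> U = {} \<longrightarrow>
               leads_to R x x' \<longrightarrow> leads_to (reduced_network R U F) x x'))"
  using part1[OF assms(2)] part2[of U R F] by auto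

end
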